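(* Let $k\ge1$, $a>0$, and let $P:\{0,1,\ldots,k\}^2\to\mathbb R$ satisfy $P(0,l)=0$ for all $l\in\{0,\ldots,k\}$, $$-2aP(1,0)=P(j,l)+P(l,j)-a\big(P(j+1,l)-P(j,l)\big)-a\big(P(l+1,j)-P(l,j)\big)\quad\text{for all }(j,l)\in\{0,\ldots,k-1\}^2,$$ $$P(k,0)-aP(1,k)=P(j,k)+P(k,j)-a\big(P(j+1,k)-P(j,k)\big)\quad\text{for all }j\in\{0,\ldots,k-1\}.$$ Then $$P(k,k)=\big((1+1/a)^k-1\big)^2aP(1,0)+\big((1+1/a)^k-1\big)\big(aP(1,k)-P(k,0)\big).$$ *)

theory Defs
  imports Complex_Main
begin

end

theory Submission
  imports Defs
begin

lemma tele:
  fixes a c :: real and f :: "nat \<Rightarrow> real"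
  assumes "a*c = 1+a"
  shows "(\<Sum>j<k. c^(k-1-j)*((1+a)*f j - a*f (Suc j))) = a*(c^k * f 0 - f k)"
proof -
  have "(\<Sum>j<k. c^(k-1-j)*((1+a)*f j - a*f (Suc j)))
      = (\<Sum>j<k. (-(a*c^(k - Suc j)*f (Suc j))) - (-(a*c^(k-j)*f j)))"
  proof (rule sum.cong)
    fix j assume "j \<in> {..<k}"
    then have e: "c^(k-j) = c*c^(k-1-j)" "k - Suc j = k-1-j"
      by (auto simp: power_Suc[symmetric] Suc_diff_Suc)
    show "c^(k-1-j)*((1+a)*f j - a*f (Suc j)) = (-(a*c^(k - Suc j)*f (Suc j))) - (-(a*c^(k-j)*f j))"
      unfolding e assms[symmetric] by (simp add: algebra_simps)
  qed simp
  also have "\<dots> = a*(c^k * f 0 - f k)"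
    by (subst sum_lessThan_telescope) (simp add: algebra_simps)
  finally show ?thesis .
qed

theorem lemma3:
  fixes k :: nat and a :: real and P :: "nat \<Rightarrow> nat \<Rightarrow> real"
  assumes "k \<ge> 1" and "a > 0"
    and "\<And>l. l \<le> k \<Longrightarrow> P 0 l = 0"
    and "\<And>j l. j < k \<Longrightarrow> l < k \<Longrightarrow>
           - 2 * a * P 1 0 = P j l + P l j - a * (P (j+1) l - P j l) - a * (P (l+1) j - P l j)"
    and "\<And>j. j < k \<Longrightarrow>
           P k 0 - a * P 1 k = P j k + P k j - a * (P (j+1) k - P j k)"
  shows "P k k = ((1 + 1/a)^k - 1)^2 * a * P 1 0 + ((1 + 1/a)^k - 1) * (a * P 1 k - P k 0)"
proof -
  define c where "c = 1 + 1/a"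
  have ac: "a*c = 1+a" using assms(2) by (simp add: c_def field_simps)
  define u where "u j = c^(k-1-j)" for j
  define h where "h j l = (1+a)*P j l - a*P (Suc j) l" for j l
  define s where "s = (\<Sum>j<k. u j)"
  have s: "s = a*(c^k - 1)"
    using tele[OF ac, of k "\<lambda>_. 1"] by (simp add: s_def u_def algebra_simps)
  have H: "\<And>l. l \<le> k \<Longrightarrow> (\<Sum>j<k. u j * h j l) = - a * P k l"
  proof -
    fix l assume "l \<le> k"
    show "(\<Sum>j<k. u j * h j l) = - a * P k l"
      using tele[OF ac, of k "\<lambda>j. P j l"] assms(3)[OF \<open>l \<le> k\<close>] by (simp add: u_def h_def)
  qed
  have E1: "\<And>j l. j<k \<Longrightarrow> l<k \<Longrightarrow> -2*a*P 1 0 = h j l + h l j"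
    using assms(4) by (simp add: h_def algebra_simps)
  have "(\<Sum>j<k. \<Sum>l<k. u j * u l * (-2*a*P 1 0)) = (\<Sum>j<k. \<Sum>l<k. u j * u l * (h j l + h l j))"
    by (intro sum.cong refl) (simp add: E1[symmetric])
  also have "\<dots> = (\<Sum>j<k. \<Sum>l<k. u j * u l * h j l) + (\<Sum>j<k. \<Sum>l<k. u j * u l * h l j)"
    by (simp add: distrib_left sum.distrib)
  also have "(\<Sum>j<k. \<Sum>l<k. u j * u l * h l j) = (\<Sum>j<k. \<Sum>l<k. u j * u l * h j l)"
    by (subst sum.swap) (simp add: mult.commute)
  also have "(\<Sum>j<k. \<Sum>l<k. u j * u l * h j l) = (\<Sum>l<k. u l * (\<Sum>j<k. u j * h j l))"
    by (subst sum.swap) (simp add: sum_distrib_left mult_ac)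
  also have "\<dots> = (\<Sum>l<k. u l * (- a * P k l))"
    using H by simp
  finally have A: "(\<Sum>j<k. \<Sum>l<k. u j * u l * (-2*a*P 1 0)) = 2 * (\<Sum>l<k. u l * (- a * P k l))"
    by simp
  have "(\<Sum>j<k. \<Sum>l<k. u j * u l * (-2*a*P 1 0)) = -2*a*P 1 0 * s^2"
    by (simp add: s_def power2_eq_square sum_product sum_distrib_left sum_distrib_right sum_negf mult_ac)
  moreover have "(\<Sum>l<k. u l * (- a * P k l)) = - (a * (\<Sum>l<k. u l * P k l))"
    by (simp add: sum_distrib_left sum_negf mult_ac)
  ultimately have B: "a * (\<Sum>l<k. u l * P k l) = a*P 1 0 * s^2"
    using A by (simp add: mult_ac) (metis)
  have E2: "\<And>j. j<k \<Longrightarrow> u j * (P k 0 - a * P 1 k) = u j * h j k + u j * P k j"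
  proof -
    fix j assume "j<k"
    from assms(5)[OF this] have e: "P k 0 - a * P 1 k = h j k + P k j"
      by (simp add: h_def algebra_simps)
    show "u j * (P k 0 - a * P 1 k) = u j * h j k + u j * P k j"
      unfolding e by (simp add: distrib_left)
  qed
  have "s * (P k 0 - a * P 1 k) = (\<Sum>j<k. u j * (P k 0 - a * P 1 k))"
    by (simp add: s_def sum_distrib_right)
  also have "\<dots> = (\<Sum>j<k. u j * h j k) + (\<Sum>j<k. u j * P k j)"
    using E2 by (simp add: sum.distrib)
  also have "\<dots> = - a * P k k + (\<Sum>j<k. u j * P k j)"
    using H by simp
  finally have C: "s * (P k 0 - a * P 1 k) = - a * P k k + (\<Sum>j<k. u j * P k j)" .
  have C': "a*P k k = (\<Sum>j<k. u j * P k j) + s*(a*P 1 k - P k 0)"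
    using C by (simp add: algebra_simps)
  have "a*a*P k k = a*(a*P k k)" by simp
  also have "\<dots> = a*(\<Sum>j<k. u j * P k j) + a*(s*(a*P 1 k - P k 0))"
    unfolding C' by (simp only: distrib_left)
  also have "\<dots> = a*P 1 0 * s^2 + a*s*(a * P 1 k - P k 0)"
    using B by simp
  finally have "a*a*P k k = a*P 1 0 * s^2 + a*s*(a * P 1 k - P k 0)" .
  hence "a*a*P k k = a*a*(a*P 1 0 * (c^k-1)^2 + (c^k-1)*(a * P 1 k - P k 0))"
    unfolding s by (simp add: algebra_simps power2_eq_square)
  hence "P k k = a*P 1 0 * (c^k-1)^2 + (c^k-1)*(a * P 1 k - P k 0)"
    using assms(2) by simp
  thus ?thesis by (simp add: c_def mult_ac)
qed

end
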